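(* In the setting of the Jordan plane $A_J=k\langle x_1,x_2\rangle/(x_2x_1-x_1x_2-x_1^2)$ with a right $K$-comodule algebra structure $\rho(x_i)=x_1\otimes a_{1i}+x_2\otimes a_{2i}$, $K$ a Hopf algebra with bijective antipode $S$, and homological codeterminant ${\sf D}$, we have $$S^2(a_{11})={\sf D}(a_{11}-2a_{21}){\sf D}^{-1},\quad S^2(a_{12})={\sf D}(a_{12}+2a_{11}-2a_{22}-4a_{21}){\sf D}^{-1},$$ $$S^2(a_{21})={\sf D}a_{21}{\sf D}^{-1},\quad S^2(a_{22})={\sf D}(a_{22}+2a_{21}){\sf D}^{-1}.$$
   Context: The Ext-algebra $E$ of $A_J$ is a left $K$-comodule algebra via $\rho^!(x_i^* )=\sum_s a_{is}\otimes x_s^*$ on $E_1=(A_1)^*$; the homological codeterminant is the grouplike ${\sf D}\in K$ with $\rho^!(\mathfrak e)={\sf D}\otimes\mathfrak e$ for $\mathfrak e$ spanning $E_2$. *)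

theory Defs
  imports Main "HOL-Library.Poly_Mapping"
begin

text \<open>
  A formal k-linear combination of "pure tensors" a1 (x) ... (x) an is an element of
  the free vector space  'K list =>0 'k.  The tensor power K^(x)n is the quotient of
  the length-n part by the subspace tker spanned by the multilinearity relators
  (additivity and k-homogeneity in every tensor slot); tensor equality is teq.
  The scalar action of k on K is the parameter sc.
\<close>

inductive tker :: "('k::field \<Rightarrow> 'K::ring_1 \<Rightarrow> 'K) \<Rightarrow> ('K list \<Rightarrow>\<^sub>0 'k) \<Rightarrow> bool"
  for sc where
  tker_zero: "tker sc 0"
| tker_add: "tker sc u \<Longrightarrow>
     tker sc (u + Poly_Mapping.single (xs @ (a + b) # ys) c
                - Poly_Mapping.single (xs @ a # ys) c - Poly_Mapping.single (xs @ b # ys) c)"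
| tker_scale: "tker sc u \<Longrightarrow>
     tker sc (u + Poly_Mapping.single (xs @ sc d a # ys) c
                - Poly_Mapping.single (xs @ a # ys) (c * d))"

definition teq :: "('k::field \<Rightarrow> 'K::ring_1 \<Rightarrow> 'K) \<Rightarrow> ('K list \<Rightarrow>\<^sub>0 'k) \<Rightarrow> ('K list \<Rightarrow>\<^sub>0 'k) \<Rightarrow> bool"
  where "teq sc u v \<longleftrightarrow> tker sc (u - v)"

definition pt :: "'K list \<Rightarrow> ('K list \<Rightarrow>\<^sub>0 'k::field)"
  where "pt xs = Poly_Mapping.single xs 1"

definition tsmult :: "'k::field \<Rightarrow> ('K list \<Rightarrow>\<^sub>0 'k) \<Rightarrow> ('K list \<Rightarrow>\<^sub>0 'k)"
  where "tsmult c u = Poly_Mapping.map (\<lambda>x. c * x) u"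

definition tens :: "('K list \<Rightarrow>\<^sub>0 'k::field) \<Rightarrow> ('K list \<Rightarrow>\<^sub>0 'k) \<Rightarrow> ('K list \<Rightarrow>\<^sub>0 'k)"
  where "tens u v = (\<Sum>xs\<in>Poly_Mapping.keys u. \<Sum>ys\<in>Poly_Mapping.keys v.
                       Poly_Mapping.single (xs @ ys) (Poly_Mapping.lookup u xs * Poly_Mapping.lookup v ys))"

definition tmul :: "('K::ring_1 list \<Rightarrow>\<^sub>0 'k::field) \<Rightarrow> ('K list \<Rightarrow>\<^sub>0 'k) \<Rightarrow> ('K list \<Rightarrow>\<^sub>0 'k)"
  where "tmul u v = (\<Sum>xs\<in>Poly_Mapping.keys u. \<Sum>ys\<in>Poly_Mapping.keys v.
                       Poly_Mapping.single (map2 (*) xs ys) (Poly_Mapping.lookup u xs * Poly_Mapping.lookup v ys))"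

definition onfirst :: "('K \<Rightarrow> ('K list \<Rightarrow>\<^sub>0 'k::field)) \<Rightarrow> ('K list \<Rightarrow>\<^sub>0 'k) \<Rightarrow> ('K list \<Rightarrow>\<^sub>0 'k)"
  \<comment> \<open>F (x) id (x) ... (x) id, applied to the first tensor factor\<close>
  where "onfirst F u = (\<Sum>xs\<in>Poly_Mapping.keys u. tsmult (Poly_Mapping.lookup u xs) (tens (F (hd xs)) (pt (tl xs))))"

definition onlast :: "('K \<Rightarrow> ('K list \<Rightarrow>\<^sub>0 'k::field)) \<Rightarrow> ('K list \<Rightarrow>\<^sub>0 'k) \<Rightarrow> ('K list \<Rightarrow>\<^sub>0 'k)"
  \<comment> \<open>id (x) ... (x) id (x) F, applied to the last tensor factor\<close>
  where "onlast F u = (\<Sum>xs\<in>Poly_Mapping.keys u. tsmult (Poly_Mapping.lookup u xs) (tens (pt (butlast xs)) (F (last xs))))"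

definition k_algebra :: "('k::field \<Rightarrow> 'K::ring_1 \<Rightarrow> 'K) \<Rightarrow> bool" where
  "k_algebra sc \<longleftrightarrow>
     (\<forall>c x y. sc c (x + y) = sc c x + sc c y) \<and>
     (\<forall>c d x. sc (c + d) x = sc c x + sc d x) \<and>
     (\<forall>c d x. sc (c * d) x = sc c (sc d x)) \<and>
     (\<forall>x. sc 1 x = x) \<and>
     (\<forall>c x y. sc c (x * y) = sc c x * y \<and> sc c (x * y) = x * sc c y)"

text \<open>The maps m o (S (x) id) and m o (id (x) S) are evaluated on the representative
  Delta x (well defined since S is linear).\<close>
definition hopf_algebra ::
  "('k::field \<Rightarrow> 'K::ring_1 \<Rightarrow> 'K) \<Rightarrow> ('K \<Rightarrow> ('K list \<Rightarrow>\<^sub>0 'k)) \<Rightarrow> ('K \<Rightarrow> 'k) \<Rightarrow> ('K \<Rightarrow> 'K) \<Rightarrow> bool"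
  where
  "hopf_algebra sc \<Delta> \<epsilon> S \<longleftrightarrow>
     k_algebra sc \<and>
     \<comment> \<open>comultiplication: linear algebra map K -> K (x) K, coassociative\<close>
     (\<forall>x. \<forall>xs\<in>Poly_Mapping.keys (\<Delta> x). length xs = 2) \<and>
     (\<forall>x y. teq sc (\<Delta> (x + y)) (\<Delta> x + \<Delta> y)) \<and>
     (\<forall>c x. teq sc (\<Delta> (sc c x)) (tsmult c (\<Delta> x))) \<and>
     (\<forall>x y. teq sc (\<Delta> (x * y)) (tmul (\<Delta> x) (\<Delta> y))) \<and>
     teq sc (\<Delta> 1) (pt [1, 1]) \<and>
     (\<forall>x. teq sc (onfirst \<Delta> (\<Delta> x)) (onlast \<Delta> (\<Delta> x))) \<and>
     \<comment> \<open>counit: linear algebra map K -> k\<close>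
     (\<forall>x y. \<epsilon> (x + y) = \<epsilon> x + \<epsilon> y) \<and>
     (\<forall>c x. \<epsilon> (sc c x) = c * \<epsilon> x) \<and>
     (\<forall>x y. \<epsilon> (x * y) = \<epsilon> x * \<epsilon> y) \<and>
     \<epsilon> 1 = 1 \<and>
     (\<forall>x. teq sc (onfirst (\<lambda>a. tsmult (\<epsilon> a) (pt [])) (\<Delta> x)) (pt [x])) \<and>
     (\<forall>x. teq sc (onlast (\<lambda>a. tsmult (\<epsilon> a) (pt [])) (\<Delta> x)) (pt [x])) \<and>
     \<comment> \<open>antipode: linear, convolution inverse of id, bijective\<close>
     (\<forall>x y. S (x + y) = S x + S y) \<and>
     (\<forall>c x. S (sc c x) = sc c (S x)) \<and>
     (\<forall>x. (\<Sum>xs\<in>Poly_Mapping.keys (\<Delta> x). sc (Poly_Mapping.lookup (\<Delta> x) xs) (S (xs ! 0) * xs ! 1)) = sc (\<epsilon> x) 1) \<and>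
     (\<forall>x. (\<Sum>xs\<in>Poly_Mapping.keys (\<Delta> x). sc (Poly_Mapping.lookup (\<Delta> x) xs) (xs ! 0 * S (xs ! 1))) = sc (\<epsilon> x) 1) \<and>
     bij S"

text \<open>Jordan plane A_J = k<x1,x2>/(r), r = x2 x1 - x1 x2 - x1^2.
  jr i j is the coefficient of the word x_i x_j in r (indices 1,2).\<close>
definition jr :: "nat \<Rightarrow> nat \<Rightarrow> 'k::field" where
  "jr i j = (if i = 2 \<and> j = 1 then 1 else if i = 1 \<and> j = 2 then -1
             else if i = 1 \<and> j = 1 then -1 else 0)"

text \<open>rho(x_i) = x1 (x) a 1 i + x2 (x) a 2 i  is a right K-comodule algebra coaction on A_J.
  With x1, x2 linearly independent and A_J(2) = (V (x) V)/k r, this means exactly: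
  (1) rho extends to an algebra map A_J -> A_J (x) K, i.e. the image
      sum_{ij} x_i x_j (x) (a i 2 a j 1 - a i 1 a j 2 - a i 1 a j 1) of r lies in k r (x) K;
  (2) coassociativity (rho (x) id) rho = (id (x) Delta) rho on generators;
  (3) counitality (id (x) eps) rho = id on generators.\<close>
definition jordan_comodule_algebra ::
  "('k::field \<Rightarrow> 'K::ring_1 \<Rightarrow> 'K) \<Rightarrow> ('K \<Rightarrow> ('K list \<Rightarrow>\<^sub>0 'k)) \<Rightarrow> ('K \<Rightarrow> 'k)
   \<Rightarrow> (nat \<Rightarrow> nat \<Rightarrow> 'K) \<Rightarrow> bool" where
  "jordan_comodule_algebra sc \<Delta> \<epsilon> a \<longleftrightarrow>
     (\<exists>z. \<forall>i\<in>{1,2}. \<forall>j\<in>{1,2}.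
        a i 2 * a j 1 - a i 1 * a j 2 - a i 1 * a j 1 = sc (jr i j) z) \<and>
     (\<forall>i\<in>{1,2}. \<forall>j\<in>{1,2}. teq sc (\<Delta> (a i j)) (\<Sum>s\<in>{1,2}. pt [a i s, a s j])) \<and>
     (\<forall>i\<in>{1,2}. \<forall>j\<in>{1,2}. \<epsilon> (a i j) = (if i = j then 1 else 0))"

text \<open>E = A_J^! = T(V^* )/(R^perp), pairing
  <x_s^* x_t^*, x_a x_b> = delta_sa delta_tb.  E_2 is spanned by e = class of x_2^* x_1^*
  (<x_2^* x_1^*, r> = 1), and x_s^* x_t^* = jr s t . e in E.  Hence
  rho^!(e) = rho^!(x_2^* ) rho^!(x_1^* ) = sum_{s,t} a 2 s a 1 t (x) x_s^* x_t^*
           = (sum_{s,t} jr s t . a 2 s a 1 t) (x) e.\<close>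
definition hcodet :: "('k::field \<Rightarrow> 'K::ring_1 \<Rightarrow> 'K) \<Rightarrow> (nat \<Rightarrow> nat \<Rightarrow> 'K) \<Rightarrow> 'K" where
  "hcodet sc a = (\<Sum>s\<in>{1::nat,2}. \<Sum>t\<in>{1::nat,2}. sc (jr s t) (a 2 s * a 1 t))"

end

theory Submission
  imports Defs
begin


definition lx :: "('a \<Rightarrow> 'b::zero \<Rightarrow> 'c::ab_group_add) \<Rightarrow> ('a \<Rightarrow>\<^sub>0 'b) \<Rightarrow> 'c"
  where "lx h u = (\<Sum>l\<in>Poly_Mapping.keys u. h l (Poly_Mapping.lookup u l))"

lemma lx_superset:
  assumes "finite A" "Poly_Mapping.keys u \<subseteq> A" "\<And>l. h l 0 = 0"
  shows "lx h u = (\<Sum>l\<in>A. h l (Poly_Mapping.lookup u l))"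
  unfolding lx_def
  by (rule sum.mono_neutral_left) (use assms in \<open>auto simp: not_in_keys_iff_lookup_eq_zero\<close>)

lemma hadd0:
  fixes h :: "'a \<Rightarrow> 'b::monoid_add \<Rightarrow> 'c::ab_group_add"
  assumes "\<And>l c d. h l (c + d) = h l c + h l d"
  shows "h l 0 = 0"
  using assms[of l 0 0] by simp

lemma lx_add:
  fixes h :: "'a \<Rightarrow> 'b::ab_group_add \<Rightarrow> 'c::ab_group_add"
  assumes "\<And>l c d. h l (c + d) = h l c + h l d"
  shows "lx h (u + v) = lx h u + lx h v"
proof -
  have z: "\<And>l. h l 0 = 0" by (rule hadd0) (rule assms)
  define A where "A = Poly_Mapping.keys u \<union> Poly_Mapping.keys v"
  have fA: "finite A" unfolding A_def by simp
  have s1: "Poly_Mapping.keys (u+v) \<subseteq> A" unfolding A_def by (rule keys_add)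
  have s2: "Poly_Mapping.keys u \<subseteq> A" "Poly_Mapping.keys v \<subseteq> A" unfolding A_def by auto
  have "lx h (u + v) = (\<Sum>l\<in>A. h l (Poly_Mapping.lookup (u+v) l))"
    by (rule lx_superset[where h=h, OF fA s1 z])
  also have "\<dots> = (\<Sum>l\<in>A. h l (Poly_Mapping.lookup u l) + h l (Poly_Mapping.lookup v l))"
    by (rule sum.cong) (simp_all only: lookup_add assms)
  also have "\<dots> = (\<Sum>l\<in>A. h l (Poly_Mapping.lookup u l)) + (\<Sum>l\<in>A. h l (Poly_Mapping.lookup v l))"
    by (rule sum.distrib)
  also have "\<dots> = lx h u + lx h v"
    using lx_superset[where h=h, OF fA s2(1) z] lx_superset[where h=h, OF fA s2(2) z] by simp
  finally show ?thesis .
qed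

lemma lx_zero[simp]: "lx h 0 = 0" by (simp add: lx_def)

lemma lx_uminus:
  fixes h :: "'a \<Rightarrow> 'b::ab_group_add \<Rightarrow> 'c::ab_group_add"
  assumes "\<And>l c d. h l (c + d) = h l c + h l d"
  shows "lx h (- u) = - lx h u"
  proof -
  have "lx h (u + - u) = lx h u + lx h (- u)" by (rule lx_add) (rule assms)
  then show ?thesis by (metis add_left_cancel add.right_inverse lx_zero)
qed

lemma lx_diff:
  fixes h :: "'a \<Rightarrow> 'b::ab_group_add \<Rightarrow> 'c::ab_group_add"
  assumes "\<And>l c d. h l (c + d) = h l c + h l d"
  shows "lx h (u - v) = lx h u - lx h v"
  proof -
  have "lx h (u + - v) = lx h u + lx h (- v)" by (rule lx_add) (rule assms)
  moreover have "lx h (- v) = - lx h v" by (rule lx_uminus) (rule assms)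
  ultimately show ?thesis by simp
qed

lemma lx_single:
  assumes "h l 0 = 0"
  shows "lx h (Poly_Mapping.single l c) = h l c"
  using assms by (simp add: lx_def)

lemma lx_sum:
  fixes h :: "'a \<Rightarrow> 'b::ab_group_add \<Rightarrow> 'c::ab_group_add"
  assumes "\<And>l c d. h l (c + d) = h l c + h l d"
  shows "lx h (\<Sum>i\<in>A. f i) = (\<Sum>i\<in>A. lx h (f i))"
  proof (induction A rule: infinite_finite_induct)
  case (insert x F)
  have "lx h (f x + sum f F) = lx h (f x) + lx h (sum f F)" by (rule lx_add) (rule assms)
  then show ?case using insert by simp
qed auto

lemma pm_expand: "u = (\<Sum>l\<in>Poly_Mapping.keys u. Poly_Mapping.single l (Poly_Mapping.lookup u l))"
  by (rule poly_mapping_eqI) (simp add: lookup_sum lookup_single when_def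
       not_in_keys_iff_lookup_eq_zero sum.delta)


definition supp2 :: "('K list \<Rightarrow>\<^sub>0 'k::zero) \<Rightarrow> bool"
  where "supp2 u \<longleftrightarrow> (\<forall>l\<in>Poly_Mapping.keys u. length l = 2)"

lemma len2E: "length l = 2 \<Longrightarrow> (\<And>x y. l = [x, y] \<Longrightarrow> P) \<Longrightarrow> P"
  by (cases l; cases "tl l") auto

lemma lx_plusf: "lx (\<lambda>l d. f l d + g l d) v = lx f v + lx g v"
  by (simp add: lx_def sum.distrib)

lemma lx_minusf: "lx (\<lambda>l d. f l d - g l d) v = lx f v - lx g v"
  by (simp add: lx_def sum_subtractf)

lemma lx_0f[simp]: "lx (\<lambda>l d. 0) v = 0"
  by (simp add: lx_def)

lemma lx_cong: "(\<And>l. l \<in> Poly_Mapping.keys v \<Longrightarrow> f l (Poly_Mapping.lookup v l) = g l (Poly_Mapping.lookup v l)) \<Longrightarrow> lx f v = lx g v"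
  by (simp add: lx_def)

lemma tmul_lx: "tmul u v = lx (\<lambda>xs c. lx (\<lambda>ys d. Poly_Mapping.single (map2 (*) xs ys) (c * d)) v) u"
  by (simp add: tmul_def lx_def)

lemma tmul_add_left: "tmul (u + u') v = tmul u v + tmul u' v"
  unfolding tmul_lx
  by (rule lx_add) (simp add: distrib_right single_add lx_plusf[symmetric])

lemma tmul_add_right: "tmul u (v + v') = tmul u v + tmul u v'"
proof -
  have "\<And>xs c. lx (\<lambda>ys d. Poly_Mapping.single (map2 (*) xs ys) (c * d)) (v + v') =
     lx (\<lambda>ys d. Poly_Mapping.single (map2 (*) xs ys) (c * d)) v + lx (\<lambda>ys d. Poly_Mapping.single (map2 (*) xs ys) (c * d)) v'"
    by (rule lx_add) (simp add: distrib_left single_add)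
  then show ?thesis unfolding tmul_lx by (simp add: lx_plusf)
qed

lemma tmul_zero_left[simp]: "tmul 0 v = 0" by (simp add: tmul_def)
lemma tmul_zero_right[simp]: "tmul u 0 = 0" by (simp add: tmul_def)

lemma tmul_diff_left: "tmul (u - u') v = tmul u v - tmul u' v"
  using tmul_add_left[of "u - u'" u' v] by (simp add: algebra_simps)

lemma tmul_diff_right: "tmul u (v - v') = tmul u v - tmul u v'"
  using tmul_add_right[of u "v - v'" v'] by (simp add: algebra_simps)

lemma tmul_single_left: "tmul (Poly_Mapping.single l c) v = lx (\<lambda>ys d. Poly_Mapping.single (map2 (*) l ys) (c * d)) v"
  unfolding tmul_lx by (rule lx_single) simp

lemma tmul_single_right: "tmul u (Poly_Mapping.single m d) = lx (\<lambda>xs c. Poly_Mapping.single (map2 (*) xs m) (c * d)) u"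
  unfolding tmul_lx by (rule lx_cong) (simp add: lx_single)

lemma tmul_single_single: "tmul (Poly_Mapping.single l c) (Poly_Mapping.single m d) = Poly_Mapping.single (map2 (*) l m) (c * d)"
  unfolding tmul_single_left by (simp add: lx_single)

inductive tk2 :: "('k::field \<Rightarrow> 'K::ring_1 \<Rightarrow> 'K) \<Rightarrow> ('K list \<Rightarrow>\<^sub>0 'k) \<Rightarrow> bool" for sc where
  t0: "tk2 sc 0"
| tA1: "tk2 sc u \<Longrightarrow> tk2 sc (u + (Poly_Mapping.single [a+b, y] c - Poly_Mapping.single [a, y] c - Poly_Mapping.single [b, y] c))"
| tA2: "tk2 sc u \<Longrightarrow> tk2 sc (u + (Poly_Mapping.single [y, a+b] c - Poly_Mapping.single [y, a] c - Poly_Mapping.single [y, b] c))"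
| tS1: "tk2 sc u \<Longrightarrow> tk2 sc (u + (Poly_Mapping.single [sc d a, y] c - Poly_Mapping.single [a, y] (c*d)))"
| tS2: "tk2 sc u \<Longrightarrow> tk2 sc (u + (Poly_Mapping.single [y, sc d a] c - Poly_Mapping.single [y, a] (c*d)))"

lemma rA1: "tk2 sc (Poly_Mapping.single [a+b, y] c - Poly_Mapping.single [a, y] c - Poly_Mapping.single [b, y] c)"
  using tk2.tA1[OF tk2.t0] by simp
lemma rA2: "tk2 sc (Poly_Mapping.single [y, a+b] c - Poly_Mapping.single [y, a] c - Poly_Mapping.single [y, b] c)"
  using tk2.tA2[OF tk2.t0] by simp
lemma rS1: "tk2 sc (Poly_Mapping.single [sc d a, y] c - Poly_Mapping.single [a, y] (c*d))"
  using tk2.tS1[OF tk2.t0] by simp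
lemma rS2: "tk2 sc (Poly_Mapping.single [y, sc d a] c - Poly_Mapping.single [y, a] (c*d))"
  using tk2.tS2[OF tk2.t0] by simp

lemma tk2_add: "tk2 sc v \<Longrightarrow> tk2 sc u \<Longrightarrow> tk2 sc (u + v)"
proof (induction v rule: tk2.induct)
  case t0 then show ?case by simp
next
  case (tA1 v a b y c) then show ?case using tk2.tA1[of sc "u+v"] by (simp add: add.assoc)
next
  case (tA2 v y a b c) then show ?case using tk2.tA2[of sc "u+v"] by (simp add: add.assoc)
next
  case (tS1 v d a y c) then show ?case using tk2.tS1[of sc "u+v"] by (simp add: add.assoc)
next
  case (tS2 v y d a c) then show ?case using tk2.tS2[of sc "u+v"] by (simp add: add.assoc)
qed

lemma tk2_uminus: "tk2 sc v \<Longrightarrow> tk2 sc (- v)"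
proof (induction v rule: tk2.induct)
  case t0 then show ?case by (simp add: tk2.t0)
next
  case (tA1 v a b y c)
  have eq: "- (v + (Poly_Mapping.single [a+b, y] c - Poly_Mapping.single [a, y] c - Poly_Mapping.single [b, y] c))
     = - v + (Poly_Mapping.single [a+b, y] (-c) - Poly_Mapping.single [a, y] (-c) - Poly_Mapping.single [b, y] (-c))"
    by (simp add: single_uminus algebra_simps)
  then show ?case by (subst eq) (rule tk2.tA1[OF tA1.IH])
next
  case (tA2 v y a b c)
  have eq: "- (v + (Poly_Mapping.single [y, a+b] c - Poly_Mapping.single [y, a] c - Poly_Mapping.single [y, b] c))
     = - v + (Poly_Mapping.single [y, a+b] (-c) - Poly_Mapping.single [y, a] (-c) - Poly_Mapping.single [y, b] (-c))"
    by (simp add: single_uminus algebra_simps)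
  then show ?case by (subst eq) (rule tk2.tA2[OF tA2.IH])
next
  case (tS1 v d a y c)
  have eq: "- (v + (Poly_Mapping.single [sc d a, y] c - Poly_Mapping.single [a, y] (c*d)))
     = - v + (Poly_Mapping.single [sc d a, y] (-c) - Poly_Mapping.single [a, y] ((-c)*d))"
    by (simp add: single_uminus algebra_simps)
  then show ?case by (subst eq) (rule tk2.tS1[OF tS1.IH])
next
  case (tS2 v y d a c)
  have eq: "- (v + (Poly_Mapping.single [y, sc d a] c - Poly_Mapping.single [y, a] (c*d)))
     = - v + (Poly_Mapping.single [y, sc d a] (-c) - Poly_Mapping.single [y, a] ((-c)*d))"
    by (simp add: single_uminus algebra_simps)
  then show ?case by (subst eq) (rule tk2.tS2[OF tS2.IH])
qed

lemma tk2_diff: "tk2 sc u \<Longrightarrow> tk2 sc v \<Longrightarrow> tk2 sc (u - v)"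
  using tk2_add[OF tk2_uminus[of sc v], of u] by simp

lemma tk2_sum: "(\<And>i. i \<in> A \<Longrightarrow> tk2 sc (f i)) \<Longrightarrow> tk2 sc (\<Sum>i\<in>A. f i)"
  by (induction A rule: infinite_finite_induct) (auto intro: tk2.t0 tk2_add)

lemma tk2_lx: "(\<And>l. l \<in> Poly_Mapping.keys v \<Longrightarrow> tk2 sc (f l (Poly_Mapping.lookup v l))) \<Longrightarrow> tk2 sc (lx f v)"
  unfolding lx_def by (rule tk2_sum)


lemma supp2_0[simp]: "supp2 0" by (simp add: supp2_def)
lemma supp2_add: "supp2 u \<Longrightarrow> supp2 v \<Longrightarrow> supp2 (u + v)"
  unfolding supp2_def by (meson UnE keys_add subsetD)
lemma keys_uminus_pm: "Poly_Mapping.keys (- u) = Poly_Mapping.keys u"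
  by (auto simp: in_keys_iff)
lemma supp2_uminus: "supp2 u \<Longrightarrow> supp2 (- u)"
  unfolding supp2_def keys_uminus_pm .
lemma supp2_diff: "supp2 (u::'a list \<Rightarrow>\<^sub>0 'b::ab_group_add) \<Longrightarrow> supp2 v \<Longrightarrow> supp2 (u - v)"
  using supp2_add[of u "-v"] supp2_uminus[of v] by simp
lemma supp2_single: "length l = 2 \<Longrightarrow> supp2 (Poly_Mapping.single l c)"
  by (simp add: supp2_def)
lemma supp2_pt: "supp2 (pt [x, y])"
  by (simp add: supp2_def pt_def)
lemma supp2_sum: "(\<And>i. i \<in> A \<Longrightarrow> supp2 (f i)) \<Longrightarrow> supp2 (\<Sum>i\<in>A. f i)"
  by (induction A rule: infinite_finite_induct) (auto intro: supp2_add)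
lemma supp2_lx: "(\<And>l. l \<in> Poly_Mapping.keys v \<Longrightarrow> supp2 (f l (Poly_Mapping.lookup v l))) \<Longrightarrow> supp2 (lx f v)"
  unfolding lx_def by (rule supp2_sum)
lemma supp2_tmul: "supp2 u \<Longrightarrow> supp2 v \<Longrightarrow> supp2 (tmul u v)"
  unfolding tmul_lx
proof (rule supp2_lx)
  fix xs assume "supp2 u" "supp2 v" "xs \<in> Poly_Mapping.keys u"
  then have lx: "length xs = 2" by (simp add: supp2_def)
  show "supp2 (lx (\<lambda>ys d. Poly_Mapping.single (map2 (*) xs ys) (Poly_Mapping.lookup u xs * d)) v)"
  proof (rule supp2_lx)
    fix ys assume "ys \<in> Poly_Mapping.keys v"
    then have "length ys = 2" using \<open>supp2 v\<close> by (simp add: supp2_def)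
    then show "supp2 (Poly_Mapping.single (map2 (*) xs ys) (Poly_Mapping.lookup u xs * Poly_Mapping.lookup v ys))"
      using lx by (intro supp2_single) simp
  qed
qed

definition r2 :: "('K list \<Rightarrow>\<^sub>0 'k::ab_group_add) \<Rightarrow> ('K list \<Rightarrow>\<^sub>0 'k)" where
  "r2 u = lx (\<lambda>l c. if length l = 2 then Poly_Mapping.single l c else 0) u"

lemma r2_add: "r2 (u + v) = r2 u + r2 v"
  unfolding r2_def by (rule lx_add) (simp add: single_add)
lemma r2_diff: "r2 (u - v) = r2 u - r2 v"
  unfolding r2_def by (rule lx_diff) (simp add: single_add)
lemma r2_single: "r2 (Poly_Mapping.single l c) = (if length l = 2 then Poly_Mapping.single l c else 0)"
  unfolding r2_def by (rule lx_single) simp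
lemma r2_id: "supp2 u \<Longrightarrow> r2 u = u"
proof -
  assume s: "supp2 u"
  have "r2 u = lx (\<lambda>l c. Poly_Mapping.single l c) u"
    unfolding r2_def by (rule lx_cong) (use s in \<open>auto simp: supp2_def\<close>)
  also have "\<dots> = u" unfolding lx_def by (rule pm_expand[symmetric])
  finally show ?thesis .
qed

context
  fixes sc :: "'k::field \<Rightarrow> 'K::ring_1 \<Rightarrow> 'K"
  assumes ka: "k_algebra sc"
begin

lemma sc_addl: "sc (c + d) x = sc c x + sc d x" using ka by (simp add: k_algebra_def)
lemma sc_addr: "sc c (x + y) = sc c x + sc c y" using ka by (simp add: k_algebra_def)
lemma sc_mult: "sc (c * d) x = sc c (sc d x)" using ka by (simp add: k_algebra_def)
lemma sc_one: "sc 1 x = x" using ka by (simp add: k_algebra_def)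
lemma sc_ml: "sc c (x * y) = sc c x * y" using ka unfolding k_algebra_def by blast
lemma sc_mr: "sc c (x * y) = x * sc c y" using ka unfolding k_algebra_def by blast
lemma sc_zero: "sc 0 x = 0" using sc_addl[of 0 0 x] by simp
lemma sc_x0: "sc c 0 = 0" using sc_addr[of c 0 0] by simp
lemma sc_neg: "sc (- c) x = - sc c x"
  using sc_addl[of c "-c" x] sc_zero by (simp add: eq_neg_iff_add_eq_0 add.commute)
lemma sc_neg1: "sc (- 1) x = - x" by (simp add: sc_neg sc_one)

lemma tker_tk2: "tker sc u \<Longrightarrow> tk2 sc (r2 u)"
proof (induction u rule: tker.induct)
  case tker_zero then show ?case by (simp add: r2_def tk2.t0)
next
  case (tker_add u xs a b ys c)
  show ?case
  proof (cases "length xs + length ys = 1")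
    case True
    then consider y where "xs = []" "ys = [y]" | x where "xs = [x]" "ys = []"
      by (cases xs; cases ys) auto
    then show ?thesis
    proof cases
      case 1
      then show ?thesis using tk2.tA1[OF tker_add.IH, of a b y c]
        by (simp add: r2_add r2_diff r2_single algebra_simps)
    next
      case 2
      then show ?thesis using tk2.tA2[OF tker_add.IH, of x a b c]
        by (simp add: r2_add r2_diff r2_single algebra_simps)
    qed
  next
    case False
    then show ?thesis using tker_add.IH by (simp add: r2_add r2_diff r2_single)
  qed
next
  case (tker_scale u xs d a ys c)
  show ?case
  proof (cases "length xs + length ys = 1")
    case True
    then consider y where "xs = []" "ys = [y]" | x where "xs = [x]" "ys = []"
      by (cases xs; cases ys) auto
    then show ?thesis
    proof cases
      case 1
      then show ?thesis using tk2.tS1[OF tker_scale.IH, of d a y c]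
        by (simp add: r2_add r2_diff r2_single algebra_simps)
    next
      case 2
      then show ?thesis using tk2.tS2[OF tker_scale.IH, of x d a c]
        by (simp add: r2_add r2_diff r2_single algebra_simps)
    qed
  next
    case False
    then show ?thesis using tker_scale.IH by (simp add: r2_add r2_diff r2_single)
  qed
qed

lemma teq_tk2: "teq sc u v \<Longrightarrow> supp2 u \<Longrightarrow> supp2 v \<Longrightarrow> tk2 sc (u - v)"
  unfolding teq_def using tker_tk2 r2_id supp2_diff by metis

lemma tk2_tmul_left: "tk2 sc w \<Longrightarrow> supp2 v \<Longrightarrow> tk2 sc (tmul w v)"
proof (induction w rule: tk2.induct)
  case t0 then show ?case by (simp add: tk2.t0)
next
  case (tA1 u a b y c)
  have "tk2 sc (tmul (Poly_Mapping.single [a+b, y] c - Poly_Mapping.single [a, y] c - Poly_Mapping.single [b, y] c) v)"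
    unfolding tmul_diff_left tmul_single_left lx_minusf[symmetric]
  proof (rule tk2_lx)
    fix ys assume "ys \<in> Poly_Mapping.keys v"
    then have "length ys = 2" using tA1.prems by (auto simp: supp2_def)
    then obtain y0 y1 where ys: "ys = [y0, y1]" by (rule len2E)
    show "tk2 sc (Poly_Mapping.single (map2 (*) [a + b, y] ys) (c * Poly_Mapping.lookup v ys) -
          Poly_Mapping.single (map2 (*) [a, y] ys) (c * Poly_Mapping.lookup v ys) -
          Poly_Mapping.single (map2 (*) [b, y] ys) (c * Poly_Mapping.lookup v ys))"
      using rA1[of sc "a*y0" "b*y0" "y*y1"] by (simp add: ys distrib_right)
  qed
  then show ?case using tA1 by (simp add: tmul_add_left tk2_add)
next
  case (tA2 u y a b c)
  have "tk2 sc (tmul (Poly_Mapping.single [y, a+b] c - Poly_Mapping.single [y, a] c - Poly_Mapping.single [y, b] c) v)"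
    unfolding tmul_diff_left tmul_single_left lx_minusf[symmetric]
  proof (rule tk2_lx)
    fix ys assume "ys \<in> Poly_Mapping.keys v"
    then have "length ys = 2" using tA2.prems by (auto simp: supp2_def)
    then obtain y0 y1 where ys: "ys = [y0, y1]" by (rule len2E)
    show "tk2 sc (Poly_Mapping.single (map2 (*) [y, a + b] ys) (c * Poly_Mapping.lookup v ys) -
          Poly_Mapping.single (map2 (*) [y, a] ys) (c * Poly_Mapping.lookup v ys) -
          Poly_Mapping.single (map2 (*) [y, b] ys) (c * Poly_Mapping.lookup v ys))"
      using rA2[of sc "y*y0" "a*y1" "b*y1"] by (simp add: ys distrib_right)
  qed
  then show ?case using tA2 by (simp add: tmul_add_left tk2_add)
next
  case (tS1 u d a y c)
  have "tk2 sc (tmul (Poly_Mapping.single [sc d a, y] c - Poly_Mapping.single [a, y] (c*d)) v)"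
    unfolding tmul_diff_left tmul_single_left lx_minusf[symmetric]
  proof (rule tk2_lx)
    fix ys assume "ys \<in> Poly_Mapping.keys v"
    then have "length ys = 2" using tS1.prems by (auto simp: supp2_def)
    then obtain y0 y1 where ys: "ys = [y0, y1]" by (rule len2E)
    show "tk2 sc (Poly_Mapping.single (map2 (*) [sc d a, y] ys) (c * Poly_Mapping.lookup v ys) -
          Poly_Mapping.single (map2 (*) [a, y] ys) (c * d * Poly_Mapping.lookup v ys))"
      using rS1[of sc d "a*y0" "y*y1" "c * Poly_Mapping.lookup v ys"]
      by (simp add: ys sc_ml[symmetric] mult_ac)
  qed
  then show ?case using tS1 by (simp add: tmul_add_left tk2_add)
next
  case (tS2 u y d a c)
  have "tk2 sc (tmul (Poly_Mapping.single [y, sc d a] c - Poly_Mapping.single [y, a] (c*d)) v)"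
    unfolding tmul_diff_left tmul_single_left lx_minusf[symmetric]
  proof (rule tk2_lx)
    fix ys assume "ys \<in> Poly_Mapping.keys v"
    then have "length ys = 2" using tS2.prems by (auto simp: supp2_def)
    then obtain y0 y1 where ys: "ys = [y0, y1]" by (rule len2E)
    show "tk2 sc (Poly_Mapping.single (map2 (*) [y, sc d a] ys) (c * Poly_Mapping.lookup v ys) -
          Poly_Mapping.single (map2 (*) [y, a] ys) (c * d * Poly_Mapping.lookup v ys))"
      using rS2[of sc "y*y0" d "a*y1" "c * Poly_Mapping.lookup v ys"]
      by (simp add: ys sc_ml[symmetric] mult_ac)
  qed
  then show ?case using tS2 by (simp add: tmul_add_left tk2_add)
qed

end


lemma tmul_pt_pt: "tmul (pt [x, y]) (pt [x', y']) = pt [x * x', y * y']"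
  unfolding pt_def tmul_single_single by simp

lemma tmul_sum_right: "tmul u (\<Sum>i\<in>A. f i) = (\<Sum>i\<in>A. tmul u (f i))"
  by (induction A rule: infinite_finite_induct) (auto simp: tmul_add_right)

lemma tmul_pt_left: "tmul (pt l) w = (\<Sum>ys\<in>Poly_Mapping.keys w. Poly_Mapping.single (map2 (*) l ys) (Poly_Mapping.lookup w ys))"
  unfolding pt_def tmul_single_left lx_def by simp

lemma tmul_pt_pt_compose:
  assumes "supp2 w"
  shows "tmul (pt [x, y]) (tmul (pt [x', y']) w) = tmul (pt [x * x', y * y']) w"
proof -
  have "tmul (pt [x, y]) (tmul (pt [x', y']) w) =
     (\<Sum>ys\<in>Poly_Mapping.keys w. tmul (pt [x, y]) (Poly_Mapping.single (map2 (*) [x', y'] ys) (Poly_Mapping.lookup w ys)))"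
    by (simp only: tmul_pt_left[of "[x', y']"] tmul_sum_right)
  also have "\<dots> = (\<Sum>ys\<in>Poly_Mapping.keys w. Poly_Mapping.single (map2 (*) [x * x', y * y'] ys) (Poly_Mapping.lookup w ys))"
  proof (rule sum.cong)
    fix ys assume "ys \<in> Poly_Mapping.keys w"
    then have "length ys = 2" using assms by (simp add: supp2_def)
    then obtain y0 y1 where ys: "ys = [y0, y1]" by (rule len2E)
    show "tmul (pt [x, y]) (Poly_Mapping.single (map2 (*) [x', y'] ys) (Poly_Mapping.lookup w ys)) =
        Poly_Mapping.single (map2 (*) [x * x', y * y'] ys) (Poly_Mapping.lookup w ys)"
      unfolding pt_def tmul_single_single by (simp add: ys mult.assoc)
  qed simp
  also have "\<dots> = tmul (pt [x * x', y * y']) w" by (simp only: tmul_pt_left)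
  finally show ?thesis .
qed

lemma tmul_pt11:
  assumes "supp2 w"
  shows "tmul (pt [1, 1]) w = w"
proof -
  have "tmul (pt [1, 1]) w = (\<Sum>ys\<in>Poly_Mapping.keys w. Poly_Mapping.single ys (Poly_Mapping.lookup w ys))"
    unfolding tmul_pt_left
  proof (rule sum.cong)
    fix ys assume "ys \<in> Poly_Mapping.keys w"
    then have "length ys = 2" using assms by (simp add: supp2_def)
    then obtain y0 y1 where ys: "ys = [y0, y1]" by (rule len2E)
    show "Poly_Mapping.single (map2 (*) [1, 1] ys) (Poly_Mapping.lookup w ys) = Poly_Mapping.single ys (Poly_Mapping.lookup w ys)"
      by (simp add: ys)
  qed simp
  also have "\<dots> = w" by (rule pm_expand[symmetric])
  finally show ?thesis .
qed

definition phi :: "('k::field \<Rightarrow> 'K::ring_1 \<Rightarrow> 'K) \<Rightarrow> ('K \<Rightarrow> 'K \<Rightarrow> 'K) \<Rightarrow> ('K list \<Rightarrow>\<^sub>0 'k) \<Rightarrow> 'K" where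
  "phi sc B u = lx (\<lambda>l c. if length l = 2 then sc c (B (l!0) (l!1)) else 0) u"

context
  fixes sc :: "'k::field \<Rightarrow> 'K::ring_1 \<Rightarrow> 'K"
  assumes ka: "k_algebra sc"
begin

lemma phi_add: "phi sc B (u + v) = phi sc B u + phi sc B v"
  unfolding phi_def by (rule lx_add) (simp add: sc_addl[OF ka])
lemma phi_diff: "phi sc B (u - v) = phi sc B u - phi sc B v"
  unfolding phi_def by (rule lx_diff) (simp add: sc_addl[OF ka])
lemma phi_pt: "phi sc B (pt [x, y]) = B x y"
  unfolding phi_def pt_def by (subst lx_single) (simp_all add: sc_zero[OF ka] sc_one[OF ka])
lemma phi_single: "phi sc B (Poly_Mapping.single [x, y] c) = sc c (B x y)"
  unfolding phi_def by (subst lx_single) (simp_all add: sc_zero[OF ka])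
lemma phi_sum: "supp2 u \<Longrightarrow> phi sc B u = (\<Sum>xs\<in>Poly_Mapping.keys u. sc (Poly_Mapping.lookup u xs) (B (xs!0) (xs!1)))"
  unfolding phi_def lx_def by (rule sum.cong) (auto simp: supp2_def)

lemma phi_tk2:
  assumes B1: "\<And>x y z. B (x + y) z = B x z + B y z"
    and B2: "\<And>x y z. B x (y + z) = B x y + B x z"
    and B3: "\<And>d x y. B (sc d x) y = sc d (B x y)"
    and B4: "\<And>d x y. B x (sc d y) = sc d (B x y)"
  shows "tk2 sc w \<Longrightarrow> phi sc B w = 0"
proof (induction w rule: tk2.induct)
  case t0 then show ?case by (simp add: phi_def)
next
  case (tA1 u a b y c) then show ?case
    by (simp add: phi_add phi_diff phi_single B1 sc_addr[OF ka])
next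
  case (tA2 u y a b c) then show ?case
    by (simp add: phi_add phi_diff phi_single B2 sc_addr[OF ka])
next
  case (tS1 u d a y c) then show ?case
    by (simp add: phi_add phi_diff phi_single B3 sc_mult[OF ka])
next
  case (tS2 u y d a c) then show ?case
    by (simp add: phi_add phi_diff phi_single B4 sc_mult[OF ka])
qed

lemma tk2_tmul_right: "tk2 sc w \<Longrightarrow> supp2 v \<Longrightarrow> tk2 sc (tmul v w)"
proof (induction w rule: tk2.induct)
  case t0 then show ?case by (simp add: tk2.t0)
next
  case (tA1 u a b y c)
  have "tk2 sc (tmul v (Poly_Mapping.single [a+b, y] c - Poly_Mapping.single [a, y] c - Poly_Mapping.single [b, y] c))"
    unfolding tmul_diff_right tmul_single_right lx_minusf[symmetric]
  proof (rule tk2_lx)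
    fix ys assume "ys \<in> Poly_Mapping.keys v"
    then have "length ys = 2" using tA1.prems by (auto simp: supp2_def)
    then obtain y0 y1 where ys: "ys = [y0, y1]" by (rule len2E)
    show "tk2 sc (Poly_Mapping.single (map2 (*) ys [a + b, y]) (Poly_Mapping.lookup v ys * c) -
          Poly_Mapping.single (map2 (*) ys [a, y]) (Poly_Mapping.lookup v ys * c) -
          Poly_Mapping.single (map2 (*) ys [b, y]) (Poly_Mapping.lookup v ys * c))"
      using rA1[of sc "y0*a" "y0*b" "y1*y"] by (simp add: ys distrib_left)
  qed
  then show ?case using tA1 by (simp add: tmul_add_right tk2_add)
next
  case (tA2 u y a b c)
  have "tk2 sc (tmul v (Poly_Mapping.single [y, a+b] c - Poly_Mapping.single [y, a] c - Poly_Mapping.single [y, b] c))"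
    unfolding tmul_diff_right tmul_single_right lx_minusf[symmetric]
  proof (rule tk2_lx)
    fix ys assume "ys \<in> Poly_Mapping.keys v"
    then have "length ys = 2" using tA2.prems by (auto simp: supp2_def)
    then obtain y0 y1 where ys: "ys = [y0, y1]" by (rule len2E)
    show "tk2 sc (Poly_Mapping.single (map2 (*) ys [y, a + b]) (Poly_Mapping.lookup v ys * c) -
          Poly_Mapping.single (map2 (*) ys [y, a]) (Poly_Mapping.lookup v ys * c) -
          Poly_Mapping.single (map2 (*) ys [y, b]) (Poly_Mapping.lookup v ys * c))"
      using rA2[of sc "y0*y" "y1*a" "y1*b"] by (simp add: ys distrib_left)
  qed
  then show ?case using tA2 by (simp add: tmul_add_right tk2_add)
next
  case (tS1 u d a y c)
  have "tk2 sc (tmul v (Poly_Mapping.single [sc d a, y] c - Poly_Mapping.single [a, y] (c*d)))"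
    unfolding tmul_diff_right tmul_single_right lx_minusf[symmetric]
  proof (rule tk2_lx)
    fix ys assume "ys \<in> Poly_Mapping.keys v"
    then have "length ys = 2" using tS1.prems by (auto simp: supp2_def)
    then obtain y0 y1 where ys: "ys = [y0, y1]" by (rule len2E)
    show "tk2 sc (Poly_Mapping.single (map2 (*) ys [sc d a, y]) (Poly_Mapping.lookup v ys * c) -
          Poly_Mapping.single (map2 (*) ys [a, y]) (Poly_Mapping.lookup v ys * (c * d)))"
      using rS1[of sc d "y0*a" "y1*y" "Poly_Mapping.lookup v ys * c"]
      by (simp add: ys sc_mr[OF ka, symmetric] mult_ac)
  qed
  then show ?case using tS1 by (simp add: tmul_add_right tk2_add)
next
  case (tS2 u y d a c)
  have "tk2 sc (tmul v (Poly_Mapping.single [y, sc d a] c - Poly_Mapping.single [y, a] (c*d)))"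
    unfolding tmul_diff_right tmul_single_right lx_minusf[symmetric]
  proof (rule tk2_lx)
    fix ys assume "ys \<in> Poly_Mapping.keys v"
    then have "length ys = 2" using tS2.prems by (auto simp: supp2_def)
    then obtain y0 y1 where ys: "ys = [y0, y1]" by (rule len2E)
    show "tk2 sc (Poly_Mapping.single (map2 (*) ys [y, sc d a]) (Poly_Mapping.lookup v ys * c) -
          Poly_Mapping.single (map2 (*) ys [y, a]) (Poly_Mapping.lookup v ys * (c * d)))"
      using rS2[of sc "y0*y" d "y1*a" "Poly_Mapping.lookup v ys * c"]
      by (simp add: ys sc_mr[OF ka, symmetric] mult_ac)
  qed
  then show ?case using tS2 by (simp add: tmul_add_right tk2_add)
qed

lemma ml2_add: "tk2 sc (pt [p, x + y] - pt [p, x] - pt [p, y])"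
  unfolding pt_def by (rule rA2)
lemma ml1_add: "tk2 sc (pt [x + y, p] - pt [x, p] - pt [y, p])"
  unfolding pt_def by (rule rA1)
lemma ml2_diff: "tk2 sc (pt [p, x - y] - pt [p, x] + pt [p, y])"
  using tk2_uminus[OF ml2_add[of p "x - y" y]] by (simp add: algebra_simps)
lemma ml1_diff: "tk2 sc (pt [x - y, p] - pt [x, p] + pt [y, p])"
  using tk2_uminus[OF ml1_add[of "x - y" y p]] by (simp add: algebra_simps)
lemma ml2_zero: "tk2 sc (pt [p, 0])"
  using rS2[of sc p 0 0 1] by (simp add: pt_def sc_zero[OF ka])
lemma ml2_neg: "tk2 sc (pt [p, - x] + pt [p, x])"
  using tk2_add[OF ml2_zero[of p] ml2_diff[of p 0 x]] by (simp add: algebra_simps)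
lemma ml2_3: "tk2 sc (pt [p, q1 - q2 - q3] - pt [p, q1] + pt [p, q2] + pt [p, q3])"
  using tk2_add[OF ml2_diff[of p "q1 - q2" q3] ml2_diff[of p q1 q2]] by (simp add: algebra_simps)
lemma ml1_3: "tk2 sc (pt [q1 - q2 - q3, p] - pt [q1, p] + pt [q2, p] + pt [q3, p])"
  using tk2_add[OF ml1_diff[of "q1 - q2" q3 p] ml1_diff[of q1 q2 p]] by (simp add: algebra_simps)

end


context
  fixes sc :: "'k::field \<Rightarrow> 'K::ring_1 \<Rightarrow> 'K" and \<Delta> :: "'K \<Rightarrow> ('K list \<Rightarrow>\<^sub>0 'k)"
    and \<epsilon> :: "'K \<Rightarrow> 'k" and S :: "'K \<Rightarrow> 'K"
  assumes H: "hopf_algebra sc \<Delta> \<epsilon> S"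
begin

lemmas HH = H[unfolded hopf_algebra_def]

lemma ka: "k_algebra sc" using HH by (rule conjunct1)
lemma sD: "supp2 (\<Delta> x)" using HH unfolding supp2_def by simp
lemma Dadd_t: "teq sc (\<Delta> (x + y)) (\<Delta> x + \<Delta> y)" using HH by simp
lemma Dmul_t: "teq sc (\<Delta> (x * y)) (tmul (\<Delta> x) (\<Delta> y))" using HH by simp
lemma D1_t: "teq sc (\<Delta> 1) (pt [1, 1])" using HH by simp
lemma eps_add: "\<epsilon> (x + y) = \<epsilon> x + \<epsilon> y" using HH by simp
lemma eps_mul: "\<epsilon> (x * y) = \<epsilon> x * \<epsilon> y" using HH by simp
lemma eps_one: "\<epsilon> 1 = 1" using HH by simp
lemma S_add: "S (x + y) = S x + S y" using HH by simp
lemma S_sc: "S (sc c x) = sc c (S x)" using HH by simp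
lemma antL0: "(\<Sum>xs\<in>Poly_Mapping.keys (\<Delta> x). sc (Poly_Mapping.lookup (\<Delta> x) xs) (S (xs ! 0) * xs ! 1)) = sc (\<epsilon> x) 1"
  using HH by simp
lemma antR0: "(\<Sum>xs\<in>Poly_Mapping.keys (\<Delta> x). sc (Poly_Mapping.lookup (\<Delta> x) xs) (xs ! 0 * S (xs ! 1))) = sc (\<epsilon> x) 1"
  using HH by simp

lemma eps_zero: "\<epsilon> 0 = 0" using eps_add[of 0 0] by (metis add_cancel_left_right add_0)
lemma eps_diff: "\<epsilon> (x - y) = \<epsilon> x - \<epsilon> y" using eps_add[of "x - y" y] by simp
lemma S_zero: "S 0 = 0" using S_add[of 0 0] by simp
lemma S_diff: "S (x - y) = S x - S y" using S_add[of "x - y" y] by simp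
lemma S_neg: "S (- x) = - S x" using S_diff[of 0 x] S_zero by simp

lemma Dadd_tk: "tk2 sc (\<Delta> (x + y) - (\<Delta> x + \<Delta> y))"
  by (rule teq_tk2[OF ka Dadd_t sD supp2_add[OF sD sD]])
lemma Dmul_tk: "tk2 sc (\<Delta> (x * y) - tmul (\<Delta> x) (\<Delta> y))"
  by (rule teq_tk2[OF ka Dmul_t sD supp2_tmul[OF sD sD]])
lemma D1_tk: "tk2 sc (\<Delta> 1 - pt [1, 1])"
  by (rule teq_tk2[OF ka D1_t sD supp2_pt])

lemma phiL_tk2: "tk2 sc w \<Longrightarrow> phi sc (\<lambda>x y. S x * y) w = 0"
  by (rule phi_tk2[OF ka]) (simp_all add: S_add S_sc algebra_simps sc_ml[OF ka, symmetric] sc_mr[OF ka, symmetric])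
lemma phiR_tk2: "tk2 sc w \<Longrightarrow> phi sc (\<lambda>x y. x * S y) w = 0"
  by (rule phi_tk2[OF ka]) (simp_all add: S_add S_sc algebra_simps sc_ml[OF ka, symmetric] sc_mr[OF ka, symmetric])

lemma antL: "tk2 sc (\<Delta> x - U) \<Longrightarrow> phi sc (\<lambda>x y. S x * y) U = sc (\<epsilon> x) 1"
proof -
  assume t: "tk2 sc (\<Delta> x - U)"
  have "phi sc (\<lambda>x y. S x * y) (\<Delta> x) = sc (\<epsilon> x) 1"
    using antL0[of x] phi_sum[OF ka sD, of "\<lambda>x y. S x * y" x] by simp
  moreover have "phi sc (\<lambda>x y. S x * y) (\<Delta> x - U) = 0" by (rule phiL_tk2[OF t])
  ultimately show ?thesis by (simp add: phi_diff[OF ka])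
qed
lemma antR: "tk2 sc (\<Delta> x - U) \<Longrightarrow> phi sc (\<lambda>x y. x * S y) U = sc (\<epsilon> x) 1"
proof -
  assume t: "tk2 sc (\<Delta> x - U)"
  have "phi sc (\<lambda>x y. x * S y) (\<Delta> x) = sc (\<epsilon> x) 1"
    using antR0[of x] phi_sum[OF ka sD, of "\<lambda>x y. x * S y" x] by simp
  moreover have "phi sc (\<lambda>x y. x * S y) (\<Delta> x - U) = 0" by (rule phiR_tk2[OF t])
  ultimately show ?thesis by (simp add: phi_diff[OF ka])
qed

lemma eqD_mul:
  assumes "tk2 sc (\<Delta> x - U)" "tk2 sc (\<Delta> y - V)" "supp2 U" "supp2 V"
  shows "tk2 sc (\<Delta> (x * y) - tmul U V)"
proof -
  have "\<Delta> (x * y) - tmul U V = (\<Delta> (x * y) - tmul (\<Delta> x) (\<Delta> y)) + tmul (\<Delta> x - U) (\<Delta> y) + tmul U (\<Delta> y - V)"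
    by (simp add: tmul_diff_left tmul_diff_right)
  moreover have "tk2 sc (tmul (\<Delta> x - U) (\<Delta> y))" by (rule tk2_tmul_left[OF ka assms(1) sD])
  moreover have "tk2 sc (tmul U (\<Delta> y - V))" by (rule tk2_tmul_right[OF ka assms(2) assms(3)])
  ultimately show ?thesis using Dmul_tk by (metis tk2_add)
qed

lemma eqD_diff:
  assumes "tk2 sc (\<Delta> x - U)" "tk2 sc (\<Delta> y - V)"
  shows "tk2 sc (\<Delta> (x - y) - (U - V))"
proof -
  have a: "tk2 sc (\<Delta> (x - y + y) - (\<Delta> (x - y) + \<Delta> y))" by (rule Dadd_tk)
  have "\<Delta> (x - y) - (U - V) = - (\<Delta> (x - y + y) - (\<Delta> (x - y) + \<Delta> y)) + (\<Delta> x - U) - (\<Delta> y - V)"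
    by simp
  then show ?thesis using a assms by (metis tk2_uminus tk2_add tk2_diff)
qed

end


lemma inv_unique2:
  fixes X b Y :: "nat \<Rightarrow> nat \<Rightarrow> 'a::ring_1"
  assumes XB: "\<And>j l. j \<in> {1,2} \<Longrightarrow> l \<in> {1,2} \<Longrightarrow> X j 1 * b 1 l + X j 2 * b 2 l = (if j = l then 1 else 0)"
    and BY: "\<And>j l. j \<in> {1,2} \<Longrightarrow> l \<in> {1,2} \<Longrightarrow> b j 1 * Y 1 l + b j 2 * Y 2 l = (if j = l then 1 else 0)"
    and jl: "j \<in> {1,2}" "l \<in> {1,2}"
  shows "X j l = Y j l"
proof -
  have "X j l = X j 1 * (if 1 = l then 1 else 0) + X j 2 * (if 2 = l then 1 else 0)"
    using jl by auto
  also have "\<dots> = X j 1 * (b 1 1 * Y 1 l + b 1 2 * Y 2 l) + X j 2 * (b 2 1 * Y 1 l + b 2 2 * Y 2 l)"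
    using BY[of 1 l] BY[of 2 l] jl by simp
  also have "\<dots> = (X j 1 * b 1 1 + X j 2 * b 2 1) * Y 1 l + (X j 1 * b 1 2 + X j 2 * b 2 2) * Y 2 l"
    by (simp add: algebra_simps)
  also have "\<dots> = (if j = 1 then 1 else 0) * Y 1 l + (if j = 2 then 1 else 0) * Y 2 l"
    using XB[of j 1] XB[of j 2] jl by simp
  also have "\<dots> = Y j l" using jl by auto
  finally show ?thesis .
qed

lemma Nform:
  fixes a N :: "nat \<Rightarrow> nat \<Rightarrow> 'a::ring_1" and D Di :: 'a
  assumes NM: "\<And>i j. i \<in> {1,2} \<Longrightarrow> j \<in> {1,2} \<Longrightarrow> N i 1 * a 1 j + N i 2 * a 2 j = (if i = j then 1 else 0)"
    and DDi: "D * Di = 1"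
    and R11: "a 1 2 * a 1 1 - a 1 1 * a 1 2 - a 1 1 * a 1 1 = - D"
    and R12: "a 1 2 * a 2 1 - a 1 1 * a 2 2 - a 1 1 * a 2 1 = - D"
    and R21: "a 2 2 * a 1 1 - a 2 1 * a 1 2 - a 2 1 * a 1 1 = D"
    and R22: "a 2 2 * a 2 1 - a 2 1 * a 2 2 - a 2 1 * a 2 1 = 0"
  shows "N 1 1 = (a 2 1 + a 2 2) * Di" "N 2 1 = - (a 2 1 * Di)"
    "N 1 2 = (a 2 1 + a 2 2 - a 1 2 - a 1 1) * Di" "N 2 2 = (a 1 1 - a 2 1) * Di"
proof -
  have gen: "N p 1 * (a 1 2 * a j 1 - a 1 1 * a j 2 - a 1 1 * a j 1) + N p 2 * (a 2 2 * a j 1 - a 2 1 * a j 2 - a 2 1 * a j 1)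
     = (N p 1 * a 1 2 + N p 2 * a 2 2) * a j 1 - (N p 1 * a 1 1 + N p 2 * a 2 1) * a j 2 - (N p 1 * a 1 1 + N p 2 * a 2 1) * a j 1" for p j
    by (simp add: algebra_simps)
  have c1: "N 1 1 * (- D) = - a 2 2 - a 2 1"
    using gen[of 1 2] R12 R22 NM[of 1 1] NM[of 1 2] by simp
  have c2: "N 2 1 * (- D) = a 2 1"
    using gen[of 2 2] R12 R22 NM[of 2 1] NM[of 2 2] by simp
  have c3: "N 1 1 * (- D) + N 1 2 * D = - a 1 2 - a 1 1"
    using gen[of 1 1] R11 R21 NM[of 1 1] NM[of 1 2] by simp
  have c4: "N 2 1 * (- D) + N 2 2 * D = a 1 1"
    using gen[of 2 1] R11 R21 NM[of 2 1] NM[of 2 2] by simp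
  have d1: "N 1 1 * D = a 2 1 + a 2 2" using c1 by (simp add: algebra_simps minus_equation_iff)
  have d2: "N 2 1 * D = - a 2 1" using c2 by (simp add: algebra_simps minus_equation_iff)
  have d3: "N 1 2 * D = a 2 1 + a 2 2 - a 1 2 - a 1 1" using c3 d1 by (simp add: algebra_simps)
  have d4: "N 2 2 * D = a 1 1 - a 2 1" using c4 d2 by (simp add: algebra_simps)
  have m: "N p q = N p q * D * Di" for p q using DDi by (simp add: mult.assoc)
  show "N 1 1 = (a 2 1 + a 2 2) * Di" using m[of 1 1] d1 by simp
  show "N 2 1 = - (a 2 1 * Di)" using m[of 2 1] d2 by simp
  show "N 1 2 = (a 2 1 + a 2 2 - a 1 2 - a 1 1) * Di" using m[of 1 2] d3 by simp
  show "N 2 2 = (a 1 1 - a 2 1) * Di" using m[of 2 2] d4 by simp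
qed


context
  fixes sc :: "'k::field \<Rightarrow> 'K::ring_1 \<Rightarrow> 'K" and \<Delta> :: "'K \<Rightarrow> ('K list \<Rightarrow>\<^sub>0 'k)"
    and \<epsilon> :: "'K \<Rightarrow> 'k" and S :: "'K \<Rightarrow> 'K" and a :: "nat \<Rightarrow> nat \<Rightarrow> 'K"
  assumes H: "hopf_algebra sc \<Delta> \<epsilon> S"
    and J: "jordan_comodule_algebra sc \<Delta> \<epsilon> a"
begin

lemmas JJ = J[unfolded jordan_comodule_algebra_def]
lemmas kaH = ka[OF H]

definition U :: "nat \<Rightarrow> nat \<Rightarrow> ('K list \<Rightarrow>\<^sub>0 'k)" where
  "U i j = pt [a i 1, a 1 j] + pt [a i 2, a 2 j]"

lemma sU: "supp2 (U i j)" unfolding U_def by (intro supp2_add supp2_pt)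

lemma hU: "i \<in> {1,2} \<Longrightarrow> j \<in> {1,2} \<Longrightarrow> tk2 sc (\<Delta> (a i j) - U i j)"
proof -
  assume ij: "i \<in> {1,2}" "j \<in> {1,2}"
  have "teq sc (\<Delta> (a i j)) (\<Sum>s\<in>{1,2}. pt [a i s, a s j])" using JJ ij by blast
  then have "teq sc (\<Delta> (a i j)) (U i j)" by (simp add: U_def)
  then show ?thesis by (rule teq_tk2[OF kaH _ sD[OF H] sU])
qed

lemma eA: "i \<in> {1,2} \<Longrightarrow> j \<in> {1,2} \<Longrightarrow> \<epsilon> (a i j) = (if i = j then 1 else 0)"
  using JJ by blast

lemma sc01: "sc (if b then 1 else 0) 1 = (if b then 1 else 0)"
  by (simp add: sc_one[OF kaH] sc_zero[OF kaH])

lemma NM: "i \<in> {1,2} \<Longrightarrow> j \<in> {1,2} \<Longrightarrow> S (a i 1) * a 1 j + S (a i 2) * a 2 j = (if i = j then 1 else 0)"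
  using antL[OF H hU, of i j] eA[of i j] by (simp add: U_def phi_add[OF kaH] phi_pt[OF kaH] sc01)

lemma MN: "i \<in> {1,2} \<Longrightarrow> j \<in> {1,2} \<Longrightarrow> a i 1 * S (a 1 j) + a i 2 * S (a 2 j) = (if i = j then 1 else 0)"
  using antR[OF H hU, of i j] eA[of i j] by (simp add: U_def phi_add[OF kaH] phi_pt[OF kaH] sc01)

definition D0 where "D0 = a 2 2 * a 1 1 - a 2 1 * a 1 2 - a 2 1 * a 1 1"

lemma hcodet_D0: "hcodet sc a = D0"
  by (simp add: hcodet_def jr_def D0_def sc_neg1[OF kaH] sc_one[OF kaH] sc_zero[OF kaH])

lemma Rels:
  "a 1 2 * a 1 1 - a 1 1 * a 1 2 - a 1 1 * a 1 1 = - D0"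
  "a 1 2 * a 2 1 - a 1 1 * a 2 2 - a 1 1 * a 2 1 = - D0"
  "a 2 2 * a 1 1 - a 2 1 * a 1 2 - a 2 1 * a 1 1 = D0"
  "a 2 2 * a 2 1 - a 2 1 * a 2 2 - a 2 1 * a 2 1 = 0"
proof -
  obtain z where Z: "\<forall>i\<in>{1,2}. \<forall>j\<in>{1,2}. a i 2 * a j 1 - a i 1 * a j 2 - a i 1 * a j 1 = sc (jr i j) z"
    using JJ by blast
  have z: "z = D0" using Z by (simp add: jr_def D0_def sc_one[OF kaH])
  show "a 1 2 * a 1 1 - a 1 1 * a 1 2 - a 1 1 * a 1 1 = - D0"
    using Z z by (simp add: jr_def sc_neg1[OF kaH])
  show "a 1 2 * a 2 1 - a 1 1 * a 2 2 - a 1 1 * a 2 1 = - D0"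
    using Z z by (simp add: jr_def sc_neg1[OF kaH])
  show "a 2 2 * a 1 1 - a 2 1 * a 1 2 - a 2 1 * a 1 1 = D0"
    by (simp add: D0_def)
  show "a 2 2 * a 2 1 - a 2 1 * a 2 2 - a 2 1 * a 2 1 = 0"
    using Z by (simp add: jr_def sc_zero[OF kaH])
qed

lemma DeltaD0: "tk2 sc (\<Delta> D0 - pt [D0, D0])"
proof -
  define W where "W = tmul (U 2 2) (U 1 1) - tmul (U 2 1) (U 1 2) - tmul (U 2 1) (U 1 1)"
  have h1: "tk2 sc (\<Delta> D0 - W)"
    unfolding D0_def W_def
    by (intro eqD_diff[OF H] eqD_mul[OF H] hU sU) auto
  let ?p11 = "a 2 1 * a 1 1" and ?p12 = "a 2 1 * a 1 2" and ?p21 = "a 2 2 * a 1 1" and ?p22 = "a 2 2 * a 1 2"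
  have A11: "tk2 sc (pt [?p11, - D0] - pt [?p11, a 1 2 * a 1 1] + pt [?p11, a 1 1 * a 1 2] + pt [?p11, a 1 1 * a 1 1])" (is "tk2 sc ?A11")
    using ml2_3[OF kaH, of ?p11 "a 1 2 * a 1 1" "a 1 1 * a 1 2" "a 1 1 * a 1 1"] by (simp only: Rels)
  have A12: "tk2 sc (pt [?p12, - D0] - pt [?p12, a 1 2 * a 2 1] + pt [?p12, a 1 1 * a 2 2] + pt [?p12, a 1 1 * a 2 1])" (is "tk2 sc ?A12")
    using ml2_3[OF kaH, of ?p12 "a 1 2 * a 2 1" "a 1 1 * a 2 2" "a 1 1 * a 2 1"] by (simp only: Rels)
  have A21: "tk2 sc (pt [?p21, D0] - pt [?p21, a 2 2 * a 1 1] + pt [?p21, a 2 1 * a 1 2] + pt [?p21, a 2 1 * a 1 1])" (is "tk2 sc ?A21")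
    using ml2_3[OF kaH, of ?p21 "a 2 2 * a 1 1" "a 2 1 * a 1 2" "a 2 1 * a 1 1"] by (simp only: Rels)
  have A22: "tk2 sc (pt [?p22, 0] - pt [?p22, a 2 2 * a 2 1] + pt [?p22, a 2 1 * a 2 2] + pt [?p22, a 2 1 * a 2 1])" (is "tk2 sc ?A22")
    using ml2_3[OF kaH, of ?p22 "a 2 2 * a 2 1" "a 2 1 * a 2 2" "a 2 1 * a 2 1"] by (simp only: Rels)
  have N11: "tk2 sc (pt [?p11, - D0] + pt [?p11, D0])" (is "tk2 sc ?N11") by (rule ml2_neg[OF kaH])
  have N12: "tk2 sc (pt [?p12, - D0] + pt [?p12, D0])" (is "tk2 sc ?N12") by (rule ml2_neg[OF kaH])
  have Z22: "tk2 sc (pt [?p22, 0])" (is "tk2 sc ?Z22") by (rule ml2_zero[OF kaH])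
  have F: "tk2 sc (pt [D0, D0] - pt [?p21, D0] + pt [?p12, D0] + pt [?p11, D0])" (is "tk2 sc ?F")
    using ml1_3[OF kaH, of ?p21 ?p12 ?p11 D0] by (simp only: D0_def)
  have W: "W = pt [?p11, a 1 2 * a 1 1] + pt [?p12, a 1 2 * a 2 1] + pt [?p21, a 2 2 * a 1 1] + pt [?p22, a 2 2 * a 2 1]
     - (pt [?p11, a 1 1 * a 1 2] + pt [?p12, a 1 1 * a 2 2] + pt [?p21, a 2 1 * a 1 2] + pt [?p22, a 2 1 * a 2 2])
     - (pt [?p11, a 1 1 * a 1 1] + pt [?p12, a 1 1 * a 2 1] + pt [?p21, a 2 1 * a 1 1] + pt [?p22, a 2 1 * a 2 1])"
    unfolding W_def U_def by (simp only: tmul_add_left tmul_add_right tmul_pt_pt) (simp add: algebra_simps)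
  have eq: "W - pt [D0, D0] = ?N11 + ?N12 + ?Z22 - ?F - ?A11 - ?A12 - ?A21 - ?A22"
    unfolding W by (simp add: algebra_simps)
  have "tk2 sc (?N11 + ?N12 + ?Z22 - ?F - ?A11 - ?A12 - ?A21 - ?A22)"
    by (rule tk2_diff[OF tk2_diff[OF tk2_diff[OF tk2_diff[OF tk2_diff[OF tk2_add[OF Z22 tk2_add[OF N12 N11]] F] A11] A12] A21] A22])
  then have "tk2 sc (W - pt [D0, D0])" by (simp only: eq)
  then have "tk2 sc ((\<Delta> D0 - W) + (W - pt [D0, D0]))" using h1 by (rule tk2_add)
  then show ?thesis by simp
qed

lemma epsD0: "\<epsilon> D0 = 1"
  by (simp add: D0_def eps_diff[OF H] eps_mul[OF H] eA)

lemma SD0: "S D0 * D0 = 1" "D0 * S D0 = 1"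
  using antL[OF H DeltaD0] antR[OF H DeltaD0]
  by (simp_all add: phi_pt[OF kaH] epsD0 sc_one[OF kaH])

lemma epsDi: "\<epsilon> (S D0) = 1"
  using eps_mul[OF H, of "S D0" D0] SD0(1) epsD0 eps_one[OF H] by simp

lemma DeltaDi: "tk2 sc (\<Delta> (S D0) - pt [S D0, S D0])"
proof -
  have m1: "tk2 sc (\<Delta> (D0 * S D0) - tmul (pt [D0, D0]) (\<Delta> (S D0)))"
    by (rule eqD_mul[OF H DeltaD0 _ supp2_pt sD[OF H]]) (simp add: tk2.t0)
  have "tk2 sc ((\<Delta> 1 - pt [1, 1]) - (\<Delta> (D0 * S D0) - tmul (pt [D0, D0]) (\<Delta> (S D0))))"
    by (rule tk2_diff[OF D1_tk[OF H] m1])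
  then have m2: "tk2 sc (tmul (pt [D0, D0]) (\<Delta> (S D0)) - pt [1, 1])" using SD0 by simp
  have "tk2 sc (tmul (pt [S D0, S D0]) (tmul (pt [D0, D0]) (\<Delta> (S D0)) - pt [1, 1]))"
    by (rule tk2_tmul_right[OF kaH m2 supp2_pt])
  then show ?thesis
    by (simp add: tmul_diff_right tmul_pt_pt_compose[OF sD[OF H]] SD0 tmul_pt11[OF sD[OF H]] tmul_pt_pt)
qed

lemma Bn: "j \<in> {1,2} \<Longrightarrow> l \<in> {1,2} \<Longrightarrow>
  S (a j 1 * S D0) * (a 1 l * S D0) + S (a j 2 * S D0) * (a 2 l * S D0) = (if j = l then 1 else 0)"
proof -
  assume jl: "j \<in> {1,2}" "l \<in> {1,2}"
  have t: "tk2 sc (\<Delta> (a j l * S D0) - tmul (U j l) (pt [S D0, S D0]))"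
    by (rule eqD_mul[OF H hU[OF jl] DeltaDi sU supp2_pt])
  show ?thesis using antL[OF H t] eA[OF jl]
    by (simp add: U_def tmul_add_left tmul_pt_pt phi_add[OF kaH] phi_pt[OF kaH] eps_mul[OF H] epsDi sc01)
qed

lemma SbD: "j \<in> {1,2} \<Longrightarrow> l \<in> {1,2} \<Longrightarrow> S (a j l * S D0) = D0 * S (a j l)"
proof -
  assume jl: "j \<in> {1,2}" "l \<in> {1,2}"
  show ?thesis
  proof (rule inv_unique2[where X="\<lambda>j l. S (a j l * S D0)" and b="\<lambda>j l. a j l * S D0" and Y="\<lambda>j l. D0 * S (a j l)", OF _ _ jl])
    fix j l :: nat assume "j \<in> {1,2}" "l \<in> {1,2}"
    then show "S (a j 1 * S D0) * (a 1 l * S D0) + S (a j 2 * S D0) * (a 2 l * S D0) = (if j = l then 1 else 0)"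
      by (rule Bn)
  next
    fix j l :: nat assume jl': "j \<in> {1,2}" "l \<in> {1,2}"
    have "a j 1 * S D0 * (D0 * S (a 1 l)) + a j 2 * S D0 * (D0 * S (a 2 l)) = a j 1 * (S D0 * D0) * S (a 1 l) + a j 2 * (S D0 * D0) * S (a 2 l)"
      by (simp add: mult.assoc)
    also have "\<dots> = (if j = l then 1 else 0)" using MN[OF jl'] SD0 by simp
    finally show "a j 1 * S D0 * (D0 * S (a 1 l)) + a j 2 * S D0 * (D0 * S (a 2 l)) = (if j = l then 1 else 0)" .
  qed
qed

lemma main_jordan:
  "D0 * S D0 = 1 \<and> S D0 * D0 = 1 \<and>
    S (S (a 1 1)) = D0 * (a 1 1 - 2 * a 2 1) * S D0 \<and>
    S (S (a 1 2)) = D0 * (a 1 2 + 2 * a 1 1 - 2 * a 2 2 - 4 * a 2 1) * S D0 \<and>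
    S (S (a 2 1)) = D0 * a 2 1 * S D0 \<and>
    S (S (a 2 2)) = D0 * (a 2 2 + 2 * a 2 1) * S D0"
proof -
  note NF = Nform[where N="\<lambda>i j. S (a i j)", OF NM SD0(2) Rels]
  have sb: "S (a j l * S D0) = D0 * S (a j l)" if "j \<in> {1,2}" "l \<in> {1,2}" for j l
    using SbD that by blast
  have n11: "S (a 1 1) = (a 2 1 + a 2 2) * S D0" using NF(1) by simp
  have n21: "S (a 2 1) = - (a 2 1 * S D0)" using NF(2) by simp
  have n12: "S (a 1 2) = (a 2 1 + a 2 2 - a 1 2 - a 1 1) * S D0" using NF(3) by simp
  have n22: "S (a 2 2) = (a 1 1 - a 2 1) * S D0" using NF(4) by simp
  have two: "(2::'K) * x = x + x" for x by (rule mult_2)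
  have four: "(4::'K) * x = x + x + x + x" for x
  proof -
    have "(4::'K) * x = (2 + 2) * x" by simp
    also have "\<dots> = x + x + x + x" by (simp only: distrib_right mult_2 add.assoc)
    finally show ?thesis .
  qed
  have e11: "S (S (a 1 1)) = S (a 2 1 * S D0) + S (a 2 2 * S D0)"
    unfolding n11 by (simp add: distrib_right S_add[OF H])
  have e12: "S (S (a 1 2)) = S (a 2 1 * S D0) + S (a 2 2 * S D0) - S (a 1 2 * S D0) - S (a 1 1 * S D0)"
    unfolding n12 by (simp add: distrib_right left_diff_distrib S_add[OF H] S_diff[OF H])
  have e21: "S (S (a 2 1)) = - S (a 2 1 * S D0)"
    unfolding n21 by (simp add: S_neg[OF H])
  have e22: "S (S (a 2 2)) = S (a 1 1 * S D0) - S (a 2 1 * S D0)"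
    unfolding n22 by (simp add: left_diff_distrib S_diff[OF H])
  have s11: "S (a 1 1 * S D0) = D0 * S (a 1 1)" by (rule sb) auto
  have s12: "S (a 1 2 * S D0) = D0 * S (a 1 2)" by (rule sb) auto
  have s21: "S (a 2 1 * S D0) = D0 * S (a 2 1)" by (rule sb) auto
  have s22: "S (a 2 2 * S D0) = D0 * S (a 2 2)" by (rule sb) auto
  have f11: "S (S (a 1 1)) = D0 * (a 1 1 - 2 * a 2 1) * S D0"
    unfolding e11 by (simp only: s21 s22 n21 n22 two) (simp add: algebra_simps)
  have f12: "S (S (a 1 2)) = D0 * (a 1 2 + 2 * a 1 1 - 2 * a 2 2 - 4 * a 2 1) * S D0"
    unfolding e12 by (simp only: s11 s12 s21 s22 n11 n12 n21 n22 two four) (simp add: algebra_simps)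
  have f21: "S (S (a 2 1)) = D0 * a 2 1 * S D0"
    unfolding e21 by (simp only: s21 n21) (simp add: algebra_simps)
  have f22: "S (S (a 2 2)) = D0 * (a 2 2 + 2 * a 2 1) * S D0"
    unfolding e22 by (simp only: s11 s21 n11 n21 two) (simp add: algebra_simps)
  show ?thesis using SD0 f11 f12 f21 f22 by simp
qed


end

theorem lemma5p8:
  fixes sc :: "'k::field \<Rightarrow> 'K::ring_1 \<Rightarrow> 'K"
    and \<Delta> :: "'K \<Rightarrow> ('K list \<Rightarrow>\<^sub>0 'k)" and \<epsilon> :: "'K \<Rightarrow> 'k" and S :: "'K \<Rightarrow> 'K"
    and a :: "nat \<Rightarrow> nat \<Rightarrow> 'K"
  assumes "hopf_algebra sc \<Delta> \<epsilon> S"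
    and "jordan_comodule_algebra sc \<Delta> \<epsilon> a"
  defines "D \<equiv> hcodet sc a"
  shows "\<exists>Di. D * Di = 1 \<and> Di * D = 1 \<and>
    S (S (a 1 1)) = D * (a 1 1 - 2 * a 2 1) * Di \<and>
    S (S (a 1 2)) = D * (a 1 2 + 2 * a 1 1 - 2 * a 2 2 - 4 * a 2 1) * Di \<and>
    S (S (a 2 1)) = D * a 2 1 * Di \<and>
    S (S (a 2 2)) = D * (a 2 2 + 2 * a 2 1) * Di"
proof -
  have "D = D0 a" unfolding D_def by (rule hcodet_D0[OF assms(1,2)])
  then show ?thesis using main_jordan[OF assms(1,2)] by blast
qed

end
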